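(* Fix $m\ge 2$. Assume that for all parameters $(s,c,k)$ an $m$-wise merger $\mathrm{mw\_merge}^s_{(c,k)}$ of order $(c,k)$ on $s$ inputs (over $X\cup\{\bot\}$) is given. Define recursively, for $1\le k\le n$, the generalized comparator network $\mathrm{mw\_sel}^n_k$ on input $\bar x\in X^n$ as follows. If $k=1$: output $\max^n(\bar x)$. If $k\ge 2$: choose integers $n_1\ge\dots\ge n_m\ge 0$ with $\sum_i n_i=n$ and $n_1<n$. Let $\bar x^1$ be the first $n_1$ elements of $\bar x$, $\bar x^2$ the next $n_2$ elements, and so on. For each row $1\le j\le n_1$ let $m'_j=\max\{i:n_i\ge j\}$ and let $\bar y^j=\mathrm{sort}^{m'_j}(\langle x^1_j,\dots,x^{m'_j}_j\rangle)$. For each $1\le i\le m$ let $k_i=\min(n_1,\lfloor k/i\rfloor)$, $l_i=\min(n_i,\lfloor k/i\rfloor)$ (so $k_i\ge l_i$), let $\bar t^i=\langle y^1_i,\dots,y^{n_i}_i\rangle$ and $\bar z^i=\mathrm{mw\_sel}^{n_i}_{l_i}(\bar t^i)$ (with $\bar z^i=\bar t^i$ if $l_i=0$). Let $s=\sum_i k_i$, $c=k_1$, $\overline{out}=\mathrm{suff}(l_1+1,\bar z^1)::\dots::\mathrm{suff}(l_m+1,\bar z^m)$, and $\overline{res}=\mathrm{mw\_merge}^s_{(c,k)}(\langle \mathrm{pref}(l_1,\bar z^1)::\bot^{k_1-l_1},\dots,\mathrm{pref}(l_m,\bar z^m)::\bot^{k_m-l_m}\rangle)$. Output $\mathrm{drop}(\bot,\overline{res})::\overline{out}$.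 Then for every choice of the splittings, $\mathrm{mw\_sel}^n_k$ is a $k$-selection network, i.e. for every $\bar x\in X^n$ the output $\mathrm{mw\_sel}^n_k(\bar x)$ is top $k$ sorted.
   Context: $X$ is a totally ordered set; $\bot\notin X$ is an auxiliary element with $\bot<x$ for all $x\in X$. A sequence is sorted if it is non-increasing. For $\bar x=\langle x_1,\dots,x_n\rangle$: $\bar x::\bar y$ is concatenation; $\mathrm{pref}(i,\bar x)=\langle x_1,\dots,x_i\rangle$, $\mathrm{suff}(i,\bar x)=\langle x_i,\dots,x_n\rangle$ (empty if $i>n$); $\bot^r$ is the sequence of $r$ copies of $\bot$; $\mathrm{drop}(b,\bar x)$ removes all occurrences of $b$ from $\bar x$. $\mathrm{sort}^p$ rearranges $p$ values into non-increasing order (a $p$-sorter). A (generalized) comparator network is a map on sequences obtained by composing sorters applied to chosen positions and fixed rearrangements of positions; in particular it permutes its input. $\max^n$ denotes a comparator network on $n$ inputs whose first output is the maximum of its inputs. A sequence $\bar x\in X^n$ is top $k$ sorted ($k\le n$) if $\langle x_1,\dots,x_k\rangle$ is sorted and $x_i\ge x_j$ for all $i\le k<j$. A $k$-selection network on $n$ inputs is a comparator network whose output is top $k$ sorted for every input. $m$-wise tuple: let $c,k,m\in\mathbb{N}$, $1\le k$, $k/m\le c$, $k_i=\min(c,\lfloor k/i\rfloor)$; a tuple $\langle\bar x^1,\dots,\bar x^m\rangle$ with $\bar x^i$ of length $k_i$ is $m$-wise of order $(c,k)$ if every $\bar x^i$ is sorted and $x^i_j\ge x^{i+1}_j$ for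 all $1\le i<m$, $1\le j\le|\bar x^{i+1}|$. An $m$-wise merger of order $(c,k)$ on $s$ inputs is a comparator network $f$ such that for every $m$-wise tuple $T=\langle\bar x^1,\dots,\bar x^m\rangle$ of order $(c,k)$ with $\sum_i|\bar x^i|=s$, $f(\bar x^1::\dots::\bar x^m)$ is top $k$ sorted. *)

theory Defs
  imports Complex_Main "HOL-Library.Option_ord"
begin

(* The auxiliary element \<bot> is modelled by None in 'a option; Option_ord gives None < Some x. *)

definition sorted_desc :: "'a::linorder list \<Rightarrow> bool" where
  "sorted_desc xs \<longleftrightarrow> sorted_wrt (\<lambda>a b. a \<ge> b) xs"

text \<open>Top k sorted (k \<le> length is the intended use).\<close>
definition top_k_sorted :: "nat \<Rightarrow> 'a::linorder list \<Rightarrow> bool" where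
  "top_k_sorted k xs \<longleftrightarrow> sorted_desc (take k xs) \<and>
     (\<forall>i j. i < k \<and> k \<le> j \<and> j < length xs \<longrightarrow> xs ! i \<ge> xs ! j)"

text \<open>Generalized comparator networks (syntax): a sequence of steps, each either a
 sorter applied to a list of (distinct) positions, or a fixed rearrangement of positions.\<close>
datatype cstep = Sorter "nat list" | Rearr "nat list"
type_synonym cnet = "cstep list"

definition apply_step :: "cstep \<Rightarrow> 'a::linorder list \<Rightarrow> 'a list" where
  "apply_step st xs = (case st of
     Sorter ps \<Rightarrow>
       (if distinct ps \<and> (\<forall>p\<in>set ps. p < length xs)
        then foldl (\<lambda>ys (p, v). ys[p := v]) xs (zip ps (rev (sort (map ((!) xs) ps))))
        else xs)
   | Rearr p \<Rightarrow>
       (if distinct p \<and> set p = {..<length xs} then map ((!) xs) p else xs))"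

definition run_net :: "cnet \<Rightarrow> 'a::linorder list \<Rightarrow> 'a list" where
  "run_net N xs = fold apply_step N xs"

text \<open>m-wise tuples of order (c,k) (indices 1-based as in the paper).\<close>
definition mwise_tuple :: "nat \<Rightarrow> nat \<Rightarrow> nat \<Rightarrow> 'b::linorder list list \<Rightarrow> bool" where
  "mwise_tuple m c k T \<longleftrightarrow> 1 \<le> k \<and> real k / real m \<le> real c \<and> length T = m \<and>
     (\<forall>i\<in>{1..m}. length (T ! (i - 1)) = min c (k div i)) \<and>
     (\<forall>i\<in>{1..m}. sorted_desc (T ! (i - 1))) \<and>
     (\<forall>i. 1 \<le> i \<and> i < m \<longrightarrow>
        (\<forall>j\<in>{1..length (T ! i)}. T ! (i - 1) ! (j - 1) \<ge> T ! i ! (j - 1)))"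

definition is_mw_merger :: "'b::linorder itself \<Rightarrow> nat \<Rightarrow> nat \<Rightarrow> nat \<Rightarrow> nat \<Rightarrow> cnet \<Rightarrow> bool" where
  "is_mw_merger _ m c k s N \<longleftrightarrow>
     (\<forall>T :: 'b list list. mwise_tuple m c k T \<and> sum_list (map length T) = s \<longrightarrow>
        top_k_sorted k (run_net N (concat T)))"

definition valid_split :: "nat \<Rightarrow> nat \<Rightarrow> nat list \<Rightarrow> bool" where
  "valid_split m n ns \<longleftrightarrow> length ns = m \<and> sorted_wrt (\<lambda>a b. a \<ge> b) ns \<and>
     sum_list ns = n \<and> ns ! 0 < n"

fun blocks :: "nat list \<Rightarrow> 'a list \<Rightarrow> 'a list list" where
  "blocks [] xs = []"
| "blocks (a # as) xs = take a xs # blocks as (drop a xs)"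

definition mprime :: "nat list \<Rightarrow> nat \<Rightarrow> nat" where
  "mprime ns j = Max {i. 1 \<le> i \<and> i \<le> length ns \<and> j \<le> ns ! (i - 1)}"

definition yrow :: "nat list \<Rightarrow> 'a::linorder list \<Rightarrow> nat \<Rightarrow> 'a list" where
  "yrow ns xs j = rev (sort (map (\<lambda>i. blocks ns xs ! (i - 1) ! (j - 1)) [1..<mprime ns j + 1]))"

definition tcol :: "nat list \<Rightarrow> 'a::linorder list \<Rightarrow> nat \<Rightarrow> 'a list" where
  "tcol ns xs i = map (\<lambda>j. yrow ns xs j ! (i - 1)) [1..<ns ! (i - 1) + 1]"

definition kval :: "nat list \<Rightarrow> nat \<Rightarrow> nat \<Rightarrow> nat" where
  "kval ns k i = min (ns ! 0) (k div i)"

definition lval :: "nat list \<Rightarrow> nat \<Rightarrow> nat \<Rightarrow> nat" where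
  "lval ns k i = min (ns ! (i - 1)) (k div i)"

text \<open>The recursive step (k \<ge> 2), given the splitting ns and the subnetworks G i
 (G i plays the role of mw_sel^{n_i}_{l_i}).\<close>
definition mw_step :: "nat \<Rightarrow> (nat \<Rightarrow> nat \<Rightarrow> nat \<Rightarrow> cnet) \<Rightarrow> nat list \<Rightarrow> nat \<Rightarrow>
    (nat \<Rightarrow> 'a::linorder list \<Rightarrow> 'a list) \<Rightarrow> 'a list \<Rightarrow> 'a list" where
  "mw_step m mw_merge ns k G xs =
    (let z = (\<lambda>i. if lval ns k i = 0 then tcol ns xs i else G i (tcol ns xs i));
         s = (\<Sum>i=1..m. kval ns k i);
         c = kval ns k 1;
         out = concat (map (\<lambda>i. drop (lval ns k i) (z i)) [1..<m+1]);
         res = run_net (mw_merge s c k)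
                 (concat (map (\<lambda>i. map Some (take (lval ns k i) (z i))
                                    @ replicate (kval ns k i - lval ns k i) None) [1..<m+1]))
     in map the (filter (\<lambda>x. x \<noteq> None) res) @ out)"

text \<open>mw_sel m mw_merge n k F: F is one of the networks mw_sel^n_k obtainable by the
 recursive construction, for some choice of the splittings (at every node) and of the
 max-networks.\<close>
inductive mw_sel :: "nat \<Rightarrow> (nat \<Rightarrow> nat \<Rightarrow> nat \<Rightarrow> cnet) \<Rightarrow> nat \<Rightarrow> nat \<Rightarrow>
    ('a::linorder list \<Rightarrow> 'a list) \<Rightarrow> bool" for m mw_merge where
  base: "1 \<le> n \<Longrightarrow> (\<forall>xs :: 'a list. length xs = n \<longrightarrow> hd (run_net N xs) = Max (set xs)) \<Longrightarrow>
         mw_sel m mw_merge n 1 (run_net N)"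
| step: "2 \<le> k \<Longrightarrow> k \<le> n \<Longrightarrow> valid_split m n ns \<Longrightarrow>
         (\<forall>i\<in>{1..m}. 1 \<le> lval ns k i \<longrightarrow> mw_sel m mw_merge (ns ! (i - 1)) (lval ns k i) (G i)) \<Longrightarrow>
         mw_sel m mw_merge n k (mw_step m mw_merge ns k G)"

end

theory Submission
  imports Defs "HOL-Library.Multiset"
begin


definition cnt :: "'a::linorder \<Rightarrow> 'a list \<Rightarrow> nat" where
  "cnt v xs = length (filter (\<lambda>a. v \<le> a) xs)"

lemma cnt_mset: "mset xs = mset ys \<Longrightarrow> cnt v xs = cnt v ys"
  unfolding cnt_def by (metis mset_filter size_mset)

lemma cnt_card: "cnt v xs = card {q. q < length xs \<and> v \<le> xs ! q}"
  unfolding cnt_def by (rule length_filter_conv_card)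

lemma cnt_append: "cnt v (xs @ ys) = cnt v xs + cnt v ys"
  unfolding cnt_def by simp

lemma topk_nth:
  assumes "top_k_sorted k z" "p < k" "p \<le> q" "q < length z"
  shows "z ! q \<le> z ! p"
proof (cases "q < k")
  case True
  have "sorted_wrt (\<lambda>a b. a \<ge> b) (take k z)" using assms(1) by (simp add: top_k_sorted_def sorted_desc_def)
  then show ?thesis using True assms
    by (metis le_eq_less_or_eq length_take min_less_iff_conj nth_take order_refl sorted_wrt_nth_less)
next
  case False
  then show ?thesis using assms unfolding top_k_sorted_def by auto
qed

lemma rank_le:
  assumes "top_k_sorted l z" "p < l" "p < length z" "p + 1 \<le> cnt v z"
  shows "v \<le> z ! p"
proof (rule ccontr)
  assume "\<not> v \<le> z ! p"
  hence lt: "z ! p < v" by simp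
  have "{q. q < length z \<and> v \<le> z ! q} \<subseteq> {..<p}"
  proof
    fix q assume q: "q \<in> {q. q < length z \<and> v \<le> z ! q}"
    show "q \<in> {..<p}"
    proof (rule ccontr)
      assume "q \<notin> {..<p}"
      hence "p \<le> q" by simp
      hence "z ! q \<le> z ! p" using topk_nth[OF assms(1,2)] q by auto
      thus False using lt q by auto
    qed
  qed
  hence "card {q. q < length z \<and> v \<le> z ! q} \<le> p"
    by (metis card_lessThan card_mono finite_lessThan)
  thus False using assms(4) by (simp add: cnt_card)
qed

lemma cnt_nth:
  assumes "top_k_sorted l z" "p < l" "p < length z"
  shows "p + 1 \<le> cnt (z ! p) z"
proof -
  have "{..p} \<subseteq> {q. q < length z \<and> z ! p \<le> z ! q}"
  proof
    fix q assume "q \<in> {..p}"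
    hence "q \<le> p" by simp
    thus "q \<in> {q. q < length z \<and> z ! p \<le> z ! q}"
      using topk_nth[OF assms(1), of q p] assms by auto
  qed
  hence "card {..p} \<le> card {q. q < length z \<and> z ! p \<le> z ! q}"
    by (rule card_mono[rotated]) auto
  thus ?thesis by (simp add: cnt_card)
qed

lemma cnt_take:
  assumes "top_k_sorted l z" "l \<le> length z"
  shows "min (cnt v z) l \<le> cnt v (take l z)"
proof (cases "\<forall>p<l. v \<le> z ! p")
  case True
  hence "filter (\<lambda>a. v \<le> a) (take l z) = take l z"
    by (auto simp: filter_id_conv in_set_conv_nth)
  hence "cnt v (take l z) = l" using assms(2) by (simp add: cnt_def)
  thus ?thesis by simp
next
  case False
  then obtain p where p: "p < l" "z ! p < v" by auto
  have "filter (\<lambda>a. v \<le> a) (drop l z) = []"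
  proof -
    { fix a assume "a \<in> set (drop l z)"
      then obtain q where q: "q < length z - l" "a = z ! (l + q)"
        by (auto simp: in_set_conv_nth)
      hence "a \<le> z ! p" using topk_nth[OF assms(1) p(1), of "l+q"] p by auto
      hence "\<not> v \<le> a" using p by auto }
    thus ?thesis by (auto simp: filter_empty_conv)
  qed
  hence "cnt v z = cnt v (take l z)"
    by (metis append.right_neutral append_take_drop_id cnt_def filter_append)
  thus ?thesis by simp
qed

lemma cnt_drop_mem:
  assumes "top_k_sorted l z" "l \<le> length z" "x \<in> set (drop l z)"
  shows "l + 1 \<le> cnt x z"
proof -
  obtain q where q: "q < length z - l" "x = z ! (l + q)"
    using assms(3) by (auto simp: in_set_conv_nth)
  have "\<forall>a\<in>set (take l z). x \<le> a"
  proof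
    fix a assume "a \<in> set (take l z)"
    then obtain p where p: "p < l" "a = z ! p" using assms(2) by (auto simp: in_set_conv_nth)
    show "x \<le> a" using topk_nth[OF assms(1) p(1), of "l+q"] p q by auto
  qed
  hence "cnt x (take l z) = l" using assms(2) by (simp add: cnt_def filter_id_conv[THEN iffD2])
  moreover have "1 \<le> cnt x (drop l z)"
    using assms(3) unfolding cnt_def by (metis One_nat_def Suc_leI filter_empty_conv length_greater_0_conv order_refl)
  ultimately show ?thesis
    by (metis add_le_mono append_take_drop_id cnt_append le_refl)
qed

lemma topk_iff:
  "top_k_sorted k xs \<longleftrightarrow> sorted_desc (take k xs) \<and>
     (\<forall>a\<in>set (take k xs). \<forall>b\<in>set (drop k xs). b \<le> a)"
proof
  assume H: "top_k_sorted k xs"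
  show "sorted_desc (take k xs) \<and> (\<forall>a\<in>set (take k xs). \<forall>b\<in>set (drop k xs). b \<le> a)"
  proof (intro conjI ballI)
    show "sorted_desc (take k xs)" using H by (simp add: top_k_sorted_def)
    fix a b assume a: "a \<in> set (take k xs)" and b: "b \<in> set (drop k xs)"
    obtain p where p: "p < k" "p < length xs" "a = xs ! p" using a by (auto simp: in_set_conv_nth)
    obtain q where q: "q < length xs - k" "b = xs ! (k + q)" using b by (auto simp: in_set_conv_nth)
    show "b \<le> a" using H p q unfolding top_k_sorted_def by auto
  qed
next
  assume H: "sorted_desc (take k xs) \<and> (\<forall>a\<in>set (take k xs). \<forall>b\<in>set (drop k xs). b \<le> a)"
  show "top_k_sorted k xs" unfolding top_k_sorted_def
  proof (intro conjI allI impI)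
    show "sorted_desc (take k xs)" using H by simp
    fix i j assume ij: "i < k \<and> k \<le> j \<and> j < length xs"
    have "xs ! i \<in> set (take k xs)" using ij by (auto simp: in_set_conv_nth intro!: exI[of _ i])
    moreover have "xs ! j \<in> set (drop k xs)" using ij
      by (auto simp: in_set_conv_nth intro!: exI[of _ "j - k"])
    ultimately show "xs ! j \<le> xs ! i" using H by blast
  qed
qed



lemma foldl_upd_mset:
  assumes "distinct ps" "\<forall>p\<in>set ps. p < length ys" "length ps = length ws"
  shows "length (foldl (\<lambda>ys (p, v). ys[p := v]) ys (zip ps ws)) = length ys \<and>
         mset (foldl (\<lambda>ys (p, v). ys[p := v]) ys (zip ps ws)) + mset (map ((!) ys) ps)
           = mset ys + mset ws"
  using assms
proof (induction ps arbitrary: ys ws)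
  case Nil
  then show ?case by simp
next
  case (Cons p ps)
  then obtain w ws' where ws: "ws = w # ws'" by (cases ws) auto
  let ?ys = "ys[p := w]"
  have IH: "length (foldl (\<lambda>ys (p, v). ys[p := v]) ?ys (zip ps ws')) = length ?ys \<and>
         mset (foldl (\<lambda>ys (p, v). ys[p := v]) ?ys (zip ps ws')) + mset (map ((!) ?ys) ps)
           = mset ?ys + mset ws'"
    using Cons ws by auto
  have m1: "map ((!) ?ys) ps = map ((!) ys) ps"
    by (intro map_cong refl) (metis Cons.prems(1) distinct.simps(2) nth_list_update_neq)
  have pl: "p < length ys" using Cons.prems by auto
  have m2: "mset ?ys + {#ys ! p#} = mset ys + {#w#}"
    using pl by (simp add: mset_update insert_DiffM)
  show ?case using IH m1 m2 ws
    by (simp add: add.assoc)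
qed

lemma apply_step_mset: "mset (apply_step st xs) = mset xs"
proof (cases st)
  case (Sorter ps)
  show ?thesis
  proof (cases "distinct ps \<and> (\<forall>p\<in>set ps. p < length xs)")
    case True
    have "mset (foldl (\<lambda>ys (p, v). ys[p := v]) xs (zip ps (rev (sort (map ((!) xs) ps)))))
           + mset (map ((!) xs) ps) = mset xs + mset (rev (sort (map ((!) xs) ps)))"
      using foldl_upd_mset[of ps xs "rev (sort (map ((!) xs) ps))"] True by simp
    hence "mset (foldl (\<lambda>ys (p, v). ys[p := v]) xs (zip ps (rev (sort (map ((!) xs) ps)))))
           = mset xs" by simp
    then show ?thesis using True Sorter by (simp add: apply_step_def)
  next
    case False
    then show ?thesis using Sorter by (auto simp: apply_step_def)
  qed
next
  case (Rearr p)
  show ?thesis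
  proof (cases "distinct p \<and> set p = {..<length xs}")
    case True
    have "mset p = mset [0..<length xs]"
      using True by (simp add: atLeast_upt) (metis mset_set_set)
    hence "mset (map ((!) xs) p) = mset (map ((!) xs) [0..<length xs])"
      by (metis mset_map)
    then show ?thesis using True Rearr by (simp add: apply_step_def map_nth)
  next
    case False
    then show ?thesis using Rearr by (auto simp: apply_step_def)
  qed
qed

lemma run_net_mset: "mset (run_net N xs) = mset xs"
  unfolding run_net_def
  by (induction N arbitrary: xs) (auto simp: apply_step_mset)

lemma some_le: "a \<noteq> None \<Longrightarrow> b \<noteq> None \<Longrightarrow> (b \<le> a) = (the b \<le> the a)"
  by (cases a; cases b) auto

lemma filter_topk:
  fixes res :: "'a::linorder option list"
  assumes "top_k_sorted k res" "k \<le> length (filter (\<lambda>x. x \<noteq> None) res)"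
  shows "top_k_sorted k (map the (filter (\<lambda>x. x \<noteq> None) res))"
proof -
  let ?P = "\<lambda>x. x \<noteq> None"
  have lenres: "k \<le> length res" using assms(2) by (meson dual_order.trans length_filter_le)
  have noNone: "\<forall>p<k. res ! p \<noteq> None"
  proof (intro allI impI)
    fix p assume p: "p < k"
    show "res ! p \<noteq> None"
    proof
      assume N: "res ! p = None"
      have "\<forall>b\<in>set (drop p res). b = None"
      proof
        fix b assume "b \<in> set (drop p res)"
        then obtain q where q: "q < length res - p" "b = res ! (p + q)" by (auto simp: in_set_conv_nth)
        have "res ! (p+q) \<le> res ! p" using topk_nth[OF assms(1) p, of "p+q"] q by auto
        thus "b = None" using N q by (metis less_eq_option_None_is_None)
      qed
      hence "filter ?P (drop p res) = []" by (auto simp: filter_empty_conv)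
      hence "filter ?P res = filter ?P (take p res)"
        by (metis append.right_neutral append_take_drop_id filter_append)
      hence "length (filter ?P res) \<le> p"
        by (metis length_filter_le length_take min.bounded_iff nle_le)
      thus False using assms(2) p by simp
    qed
  qed
  have tk: "filter ?P (take k res) = take k res"
    using noNone by (auto simp: filter_id_conv in_set_conv_nth)
  have fe: "filter ?P res = take k res @ filter ?P (drop k res)"
    by (metis append_take_drop_id filter_append tk)
  have lt: "length (take k res) = k" using lenres by simp
  have A1: "take k (map the (filter ?P res)) = map the (take k res)" using fe lt by simp
  have A2: "drop k (map the (filter ?P res)) = map the (filter ?P (drop k res))" using fe lt by simp
  have R: "sorted_desc (take k res) \<and> (\<forall>a\<in>set (take k res). \<forall>b\<in>set (drop k res). b \<le> a)"
    using assms(1) topk_iff by blast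
  have tkS: "\<forall>a\<in>set (take k res). a \<noteq> None" using noNone by (auto simp: in_set_conv_nth)
  show ?thesis unfolding topk_iff A1 A2
  proof (intro conjI ballI)
    show "sorted_desc (map the (take k res))"
      unfolding sorted_desc_def sorted_wrt_map
    proof (rule sorted_wrt_mono_rel[of _ "\<lambda>a b. a \<ge> b"])
      fix x y assume "x \<in> set (take k res)" "y \<in> set (take k res)" "y \<le> x"
      thus "the y \<le> the x" using tkS some_le by metis
    next
      show "sorted_wrt (\<lambda>a b. b \<le> a) (take k res)" using R unfolding sorted_desc_def by simp
    qed
    fix a b assume a: "a \<in> set (map the (take k res))" and b: "b \<in> set (map the (filter ?P (drop k res)))"
    obtain a' where a': "a' \<in> set (take k res)" "a = the a'" using a by auto
    obtain b' where b': "b' \<in> set (drop k res)" "b' \<noteq> None" "b = the b'" using b by auto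
    have "b' \<le> a'" using R a'(1) b'(1) by simp
    moreover have "a' \<noteq> None" using tkS a'(1) by simp
    ultimately show "b \<le> a" using a'(2) b'(2,3) some_le by metis
  qed
qed



lemma arith_sum:
  assumes "1 \<le> (i::nat)"
  shows "k \<le> (\<Sum>i'\<in>{1..i}. min (k div i + 1) (k div i'))"
proof -
  let ?q = "k div i" and ?r = "k mod i"
  have r: "?r < i" using assms by simp
  have kq: "k = i * ?q + ?r" by simp
  have trm: "?q + (if i' \<le> ?r then 1 else 0) \<le> min (?q + 1) (k div i')" if i': "i' \<in> {1..i}" for i'
  proof (cases "i' \<le> ?r")
    case True
    have "(?q+1) * i' \<le> (?q+1) * ?r" using True by (rule mult_le_mono2)
    also have "\<dots> = ?q * ?r + ?r" by (simp add: algebra_simps)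
    also have "\<dots> \<le> ?q * i + ?r" by (rule add_le_mono1[OF mult_le_mono2[OF less_imp_le[OF r]]])
    also have "\<dots> = k" using kq by (simp add: mult.commute)
    finally have "?q + 1 \<le> k div i'" using i' by (simp add: less_eq_div_iff_mult_less_eq)
    then show ?thesis using True by simp
  next
    case False
    have "?q \<le> k div i'" using i' by (simp add: div_le_mono2)
    then show ?thesis using False by simp
  qed
  have "(\<Sum>i'\<in>{1..i}. (?q + (if i' \<le> ?r then 1 else 0))) = i * ?q + card {i'\<in>{1..i}. i' \<le> ?r}"
    by (simp add: sum.distrib sum.If_cases Int_def)
  also have "{i'\<in>{1..i}. i' \<le> ?r} = {1..?r}" using r by auto
  finally have "(\<Sum>i'\<in>{1..i}. (?q + (if i' \<le> ?r then 1 else 0))) = k" using kq by simp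
  moreover have "(\<Sum>i'\<in>{1..i}. (?q + (if i' \<le> ?r then 1 else 0))) \<le> (\<Sum>i'\<in>{1..i}. min (?q + 1) (k div i'))"
    by (rule sum_mono) (rule trm)
  ultimately show ?thesis by simp
qed




lemma mset_concat_upt: "mset (concat (map f [a..<b])) = (\<Sum>i\<in>{a..<b}. mset (f i))"
  by (induction b) (auto simp: atLeastLessThanSuc)

lemma map_nth_shift: "map (\<lambda>i. L ! (i - 1)) [1..<length L + 1] = L"
  by (rule nth_equalityI) (simp_all del: upt_Suc)

lemma mset_map_upt1: "mset (map f [1..<b + 1]) = (\<Sum>i\<in>{1..b}. {#f i#})"
proof -
  have "mset (map f [1..<b + 1]) = mset (concat (map (\<lambda>i. [f i]) [1..<b + 1]))"
    by (simp only: concat_map_singleton)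
  also have "\<dots> = (\<Sum>i\<in>{1..<b + 1}. mset [f i])" by (rule mset_concat_upt)
  also have "{1..<b + 1} = {1..b}" by auto
  finally show ?thesis by (simp only: mset.simps)
qed

lemma mset_as_sum: "mset L = (\<Sum>i\<in>{1..length L}. {#L ! (i - 1)#})"
  by (metis map_nth_shift mset_map_upt1)

lemma blocks_len: "length (blocks ns xs) = length ns"
  by (induction ns arbitrary: xs) auto

lemma blocks_nth_len: "sum_list ns \<le> length xs \<Longrightarrow> i < length ns \<Longrightarrow> length (blocks ns xs ! i) = ns ! i"
proof (induction ns arbitrary: xs i)
  case Nil then show ?case by simp
next
  case (Cons a ns)
  show ?case
  proof (cases i)
    case 0 then show ?thesis using Cons.prems by simp
  next
    case (Suc i') then show ?thesis using Cons.prems Cons.IH[of "drop a xs" i'] by simp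
  qed
qed

lemma concat_blocks: "concat (blocks ns xs) = take (sum_list ns) xs"
  by (induction ns arbitrary: xs) (auto simp: take_add)

locale mx =
  fixes m n :: nat and ns :: "nat list" and xs :: "'a::linorder list"
  assumes vs: "valid_split m n ns" and lx: "length xs = n"
begin

lemma lns: "length ns = m" and sns: "sum_list ns = n" and n1n: "ns ! 0 < n"
  and srt: "sorted_wrt (\<lambda>a b. a \<ge> b) ns"
  using vs by (auto simp: valid_split_def)

lemma m1: "1 \<le> m"
proof (rule ccontr)
  assume "\<not> 1 \<le> m" hence "ns = []" using lns by (cases ns) auto
  thus False using sns n1n by simp
qed

lemma ns_mono: "i \<le> i' \<Longrightarrow> i' < m \<Longrightarrow> ns ! i' \<le> ns ! i"
  using srt lns by (metis le_eq_less_or_eq order_refl sorted_wrt_nth_less)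

lemma ns_le_n1: "i < m \<Longrightarrow> ns ! i \<le> ns ! 0"
  using ns_mono by simp

lemma blk_len: "i < m \<Longrightarrow> length (blocks ns xs ! i) = ns ! i"
  using blocks_nth_len[of ns xs i] sns lx lns by simp

lemma concat_blk: "concat (blocks ns xs) = xs"
  using concat_blocks[of ns xs] sns lx by simp

lemma mp_fin: "finite {i. 1 \<le> i \<and> i \<le> length ns \<and> j \<le> ns ! (i - 1)}" by simp

lemma mp_mem: assumes "j \<le> ns ! 0"
  shows "mprime ns j \<in> {i. 1 \<le> i \<and> i \<le> length ns \<and> j \<le> ns ! (i - 1)}"
proof -
  have "1 \<in> {i. 1 \<le> i \<and> i \<le> length ns \<and> j \<le> ns ! (i - 1)}" using assms m1 lns by simp
  thus ?thesis unfolding mprime_def using Max_in[OF mp_fin] by blast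
qed

lemma mp_bounds: assumes "j \<le> ns ! 0" shows "1 \<le> mprime ns j" "mprime ns j \<le> m"
  using mp_mem[OF assms] lns by auto

lemma mp_iff: assumes "j \<le> ns ! 0" "1 \<le> i" "i \<le> m"
  shows "i \<le> mprime ns j \<longleftrightarrow> j \<le> ns ! (i - 1)"
proof
  assume "j \<le> ns ! (i - 1)"
  thus "i \<le> mprime ns j" unfolding mprime_def using assms lns by (intro Max_ge[OF mp_fin]) auto
next
  assume H: "i \<le> mprime ns j"
  have "j \<le> ns ! (mprime ns j - 1)" using mp_mem[OF assms(1)] by simp
  also have "\<dots> \<le> ns ! (i - 1)" using H mp_bounds[OF assms(1)] assms by (intro ns_mono) auto
  finally show "j \<le> ns ! (i - 1)" .
qed

abbreviation "B i j \<equiv> blocks ns xs ! (i - 1) ! (j - 1)"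

lemma yrow_len: "length (yrow ns xs j) = mprime ns j"
  by (simp add: yrow_def)

lemma yrow_sorted: "sorted_desc (yrow ns xs j)"
  unfolding yrow_def sorted_desc_def sorted_wrt_rev by simp

lemma yrow_mset: "mset (yrow ns xs j) = (\<Sum>i\<in>{1..mprime ns j}. {#B i j#})"
proof -
  have "mset (yrow ns xs j) = mset (map (\<lambda>i. B i j) [1..<mprime ns j + 1])"
    unfolding yrow_def by (simp only: mset_rev mset_sort)
  also have "\<dots> = (\<Sum>i\<in>{1..mprime ns j}. {#B i j#})" by (rule mset_map_upt1)
  finally show ?thesis .
qed

lemma yrow_dom: assumes "1 \<le> i'" "i' \<le> i" "i \<le> m" "1 \<le> j" "j \<le> ns ! (i - 1)"
  shows "yrow ns xs j ! (i - 1) \<le> yrow ns xs j ! (i' - 1)"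
proof -
  have "i - 1 < m" using assms by auto
  hence j0: "j \<le> ns ! 0" using ns_le_n1[of "i - 1"] assms(5) by linarith
  have "i \<le> mprime ns j" using mp_iff[OF j0] assms by auto
  hence "i - 1 < length (yrow ns xs j)" using assms by (simp add: yrow_len)
  thus ?thesis using yrow_sorted[of j] assms unfolding sorted_desc_def
    by (metis diff_le_mono le_eq_less_or_eq order_refl sorted_wrt_nth_less)
qed

lemma tcol_len: "length (tcol ns xs i) = ns ! (i - 1)"
  by (simp add: tcol_def)

lemma tcol_nth: "j < ns ! (i - 1) \<Longrightarrow> tcol ns xs i ! j = yrow ns xs (j + 1) ! (i - 1)"
  by (simp add: tcol_def del: upt_Suc)

lemma tcol_mset: "mset (tcol ns xs i) = (\<Sum>j\<in>{1..ns ! (i - 1)}. {#yrow ns xs j ! (i - 1)#})"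
  unfolding tcol_def by (rule mset_map_upt1)

lemma cnt_tcol: "cnt v (tcol ns xs i) = card {j\<in>{1..ns ! (i - 1)}. v \<le> yrow ns xs j ! (i - 1)}"
proof -
  have "cnt v (tcol ns xs i) = card {q. q < ns ! (i - 1) \<and> v \<le> yrow ns xs (q + 1) ! (i - 1)}"
    by (simp add: cnt_card tcol_len tcol_nth cong: conj_cong)
  also have "\<dots> = card ((\<lambda>q. q + 1) ` {q. q < ns ! (i - 1) \<and> v \<le> yrow ns xs (q + 1) ! (i - 1)})"
    by (simp add: card_image)
  also have "(\<lambda>q. q + 1) ` {q. q < ns ! (i - 1) \<and> v \<le> yrow ns xs (q + 1) ! (i - 1)}
      = {j\<in>{1..ns ! (i - 1)}. v \<le> yrow ns xs j ! (i - 1)}"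
  proof (rule set_eqI, rule iffI)
    fix x assume "x \<in> {j\<in>{1..ns ! (i - 1)}. v \<le> yrow ns xs j ! (i - 1)}"
    thus "x \<in> (\<lambda>q. q + 1) ` {q. q < ns ! (i - 1) \<and> v \<le> yrow ns xs (q + 1) ! (i - 1)}"
      by (intro image_eqI[of _ _ "x - 1"]) auto
  qed auto
  finally show ?thesis .
qed

lemma cnt_tcol_mono: assumes "1 \<le> i'" "i' \<le> i" "i \<le> m"
  shows "cnt v (tcol ns xs i) \<le> cnt v (tcol ns xs i')"
  unfolding cnt_tcol
proof (rule card_mono)
  show "finite {j \<in> {1..ns ! (i' - 1)}. v \<le> yrow ns xs j ! (i' - 1)}" by simp
  have "ns ! (i - 1) \<le> ns ! (i' - 1)" using assms by (intro ns_mono) auto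
  thus "{j \<in> {1..ns ! (i - 1)}. v \<le> yrow ns xs j ! (i - 1)} \<subseteq> {j \<in> {1..ns ! (i' - 1)}. v \<le> yrow ns xs j ! (i' - 1)}"
    using yrow_dom[OF assms] by (auto intro: order_trans)
qed

lemma swap: "(\<Sum>i\<in>{1..m}. \<Sum>j\<in>{1..ns ! (i - 1)}. g i j) = (\<Sum>j\<in>{1..ns ! 0}. \<Sum>i\<in>{1..mprime ns j}. g i j)"
proof -
  have "(\<Sum>i\<in>{1..m}. \<Sum>j\<in>{j\<in>{1..ns ! 0}. j \<le> ns ! (i - 1)}. g i j)
      = (\<Sum>j\<in>{1..ns ! 0}. \<Sum>i\<in>{i\<in>{1..m}. j \<le> ns ! (i - 1)}. g i j)"
    by (rule sum.swap_restrict) auto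
  moreover have "\<And>i. i \<in> {1..m} \<Longrightarrow> {j\<in>{1..ns ! 0}. j \<le> ns ! (i - 1)} = {1..ns ! (i - 1)}"
  proof -
    fix i assume i: "i \<in> {1..m}"
    hence "ns ! (i - 1) \<le> ns ! 0" using ns_le_n1[of "i - 1"] by auto
    thus "{j\<in>{1..ns ! 0}. j \<le> ns ! (i - 1)} = {1..ns ! (i - 1)}" by auto
  qed
  moreover have "\<And>j. j \<in> {1..ns ! 0} \<Longrightarrow> {i\<in>{1..m}. j \<le> ns ! (i - 1)} = {1..mprime ns j}"
  proof -
    fix j assume j: "j \<in> {1..ns ! 0}"
    show "{i\<in>{1..m}. j \<le> ns ! (i - 1)} = {1..mprime ns j}"
    proof (rule set_eqI)
      fix i
      show "i \<in> {i\<in>{1..m}. j \<le> ns ! (i - 1)} \<longleftrightarrow> i \<in> {1..mprime ns j}"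
        using mp_iff[of j i] mp_bounds[of j] j by auto
    qed
  qed
  ultimately show ?thesis by simp
qed

lemma mset_tcols: "(\<Sum>i\<in>{1..m}. mset (tcol ns xs i)) = mset xs"
proof -
  have "(\<Sum>i\<in>{1..m}. mset (tcol ns xs i)) = (\<Sum>i\<in>{1..m}. \<Sum>j\<in>{1..ns ! (i - 1)}. {#yrow ns xs j ! (i - 1)#})"
    by (intro sum.cong refl) (rule tcol_mset)
  also have "\<dots> = (\<Sum>j\<in>{1..ns ! 0}. \<Sum>i\<in>{1..mprime ns j}. {#yrow ns xs j ! (i - 1)#})"
    by (rule swap)
  also have "\<dots> = (\<Sum>j\<in>{1..ns ! 0}. \<Sum>i\<in>{1..mprime ns j}. {#B i j#})"
  proof (rule sum.cong[OF refl])
    fix j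
    have "(\<Sum>i\<in>{1..mprime ns j}. {#yrow ns xs j ! (i - 1)#}) = mset (yrow ns xs j)"
      using mset_as_sum[of "yrow ns xs j"] yrow_len[of j] by simp
    thus "(\<Sum>i\<in>{1..mprime ns j}. {#yrow ns xs j ! (i - 1)#}) = (\<Sum>i\<in>{1..mprime ns j}. {#B i j#})"
      using yrow_mset[of j] by simp
  qed
  also have "\<dots> = (\<Sum>i\<in>{1..m}. \<Sum>j\<in>{1..ns ! (i - 1)}. {#B i j#})"
    by (rule swap[symmetric])
  also have "\<dots> = (\<Sum>i\<in>{1..m}. mset (blocks ns xs ! (i - 1)))"
  proof (rule sum.cong[OF refl])
    fix i assume i: "i \<in> {1..m}"
    hence "length (blocks ns xs ! (i - 1)) = ns ! (i - 1)" using blk_len[of "i - 1"] by auto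
    thus "(\<Sum>j\<in>{1..ns ! (i - 1)}. {#B i j#}) = mset (blocks ns xs ! (i - 1))"
      using mset_as_sum[of "blocks ns xs ! (i - 1)"] by simp
  qed
  also have "\<dots> = mset xs"
  proof -
    have "mset xs = mset (concat (blocks ns xs))" using concat_blk by simp
    also have "\<dots> = mset (concat (map (\<lambda>i. blocks ns xs ! (i - 1)) [1..<m + 1]))"
      using map_nth_shift[of "blocks ns xs"] blocks_len[of ns xs] lns by simp
    also have "\<dots> = (\<Sum>i\<in>{1..<m + 1}. mset (blocks ns xs ! (i - 1)))" by (rule mset_concat_upt)
    finally show ?thesis by (metis Suc_eq_plus1 atLeastLessThanSuc_atLeastAtMost)
  qed
  finally show ?thesis .
qed

end



lemma cnt_concat_upt: "cnt v (concat (map f [a..<b])) = (\<Sum>i\<in>{a..<b}. cnt v (f i))"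
  by (induction b) (auto simp: atLeastLessThanSuc cnt_append cnt_def)

lemma nth_pad_Some: "p < l \<Longrightarrow> l \<le> length z \<Longrightarrow> (map Some (take l z) @ replicate r None) ! p = Some (z ! p)"
  by (simp add: nth_append)

lemma nth_pad_None: "l \<le> p \<Longrightarrow> p < l + r \<Longrightarrow> l \<le> length z \<Longrightarrow> (map Some (take l z) @ replicate r None) ! p = None"
  by (simp add: nth_append)

lemma sum_list_le: "sum_list ns \<le> length ns * ns ! 0" if "\<forall>i<length ns. ns ! i \<le> ns ! 0" for ns :: "nat list"
proof -
  have "sum_list ns = (\<Sum>i = 0..<length ns. ns ! i)" by (rule sum_list_sum_nth)
  also have "\<dots> \<le> (\<Sum>i = 0..<length ns. ns ! 0)" using that by (intro sum_mono) auto
  finally show ?thesis by simp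
qed

context mx begin

lemma step_correct:
  fixes mw_merge :: "nat \<Rightarrow> nat \<Rightarrow> nat \<Rightarrow> cnet" and G :: "nat \<Rightarrow> 'a list \<Rightarrow> 'a list"
  assumes k2: "2 \<le> k" and kn: "k \<le> n"
    and merger: "\<forall>s c k. is_mw_merger TYPE('a option) m c k s (mw_merge s c k)"
    and Gok: "\<forall>i\<in>{1..m}. 1 \<le> lval ns k i \<longrightarrow>
        (\<forall>ys. length ys = ns ! (i - 1) \<longrightarrow> top_k_sorted (lval ns k i) (G i ys) \<and> mset (G i ys) = mset ys)"
  shows "top_k_sorted k (mw_step m mw_merge ns k G xs) \<and> mset (mw_step m mw_merge ns k G xs) = mset xs"
proof -
  define l where "l i = lval ns k i" for i
  define kv where "kv i = kval ns k i" for i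
  define z where "z i = (if lval ns k i = 0 then tcol ns xs i else G i (tcol ns xs i))" for i
  define T where "T = map (\<lambda>i. map Some (take (l i) (z i)) @ replicate (kv i - l i) None) [1..<m+1]"
  define s where "s = (\<Sum>i=1..m. kval ns k i)"
  define c where "c = kval ns k 1"
  define res where "res = run_net (mw_merge s c k) (concat T)"
  define out where "out = concat (map (\<lambda>i. drop (l i) (z i)) [1..<m+1])"
  define A where "A = map the (filter (\<lambda>x. x \<noteq> None) res)"
  define PRE where "PRE = concat (map (\<lambda>i. take (l i) (z i)) [1..<m+1])"
  have unf: "mw_step m mw_merge ns k G xs = A @ out"
    unfolding mw_step_def Let_def A_def res_def out_def T_def z_def s_def c_def l_def kv_def by simp
  have Z: "top_k_sorted (l i) (z i) \<and> mset (z i) = mset (tcol ns xs i)" if i: "i \<in> {1..m}" for i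
  proof (cases "l i = 0")
    case True
    then show ?thesis unfolding z_def l_def by (simp add: topk_iff sorted_desc_def)
  next
    case False
    then show ?thesis using Gok i unfolding z_def l_def by (simp add: tcol_len)
  qed
  have zlen: "length (z i) = ns ! (i - 1)" if i: "i \<in> {1..m}" for i
    using Z[OF i] tcol_len by (metis size_mset)
  have l_le: "l i \<le> ns ! (i - 1)" for i by (simp add: l_def lval_def)
  have l_le_kv: "l i \<le> kv i" if i: "i \<in> {1..m}" for i
  proof -
    have "i - 1 < m" using i by auto
    hence "ns ! (i - 1) \<le> ns ! 0" by (rule ns_le_n1)
    thus ?thesis by (auto simp: l_def kv_def lval_def kval_def)
  qed
  have l_mono: "l (i + 1) \<le> l i" if "1 \<le> i" "i + 1 \<le> m" for i
  proof -
    have "ns ! i \<le> ns ! (i - 1)" using that by (intro ns_mono) auto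
    moreover have "k div (i + 1) \<le> k div i" using that by (intro div_le_mono2) auto
    ultimately show ?thesis by (auto simp: l_def lval_def)
  qed
  have Tnth: "T ! (i - 1) = map Some (take (l i) (z i)) @ replicate (kv i - l i) None" if i: "i \<in> {1..m}" for i
  proof -
    have "i - 1 < length [1..<m+1]" using i by auto
    moreover have "[1..<m+1] ! (i - 1) = i" using i by (simp del: upt_Suc)
    ultimately show ?thesis unfolding T_def by (simp only: nth_map)
  qed
  have Tlen: "length (T ! (i - 1)) = kv i" if i: "i \<in> {1..m}" for i
    using Tnth[OF i] zlen[OF i] l_le[of i] l_le_kv[OF i] by simp
  have ckv: "kv 1 = min (ns ! 0) k" by (simp add: kv_def kval_def)
  have sl: "n \<le> m * ns ! 0" using sum_list_le[of ns] ns_le_n1 sns lns by simp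
  have MT: "mwise_tuple m c k T"
    unfolding mwise_tuple_def
  proof (intro conjI ballI allI impI)
    show "1 \<le> k" using k2 by simp
    have mpos: "real m > 0" using m1 by simp
    have "real k \<le> real m * real (ns ! 0)" using sl kn by (metis le_trans of_nat_le_iff of_nat_mult)
    hence a: "real k / real m \<le> real (ns ! 0)" using mpos by (simp add: divide_le_eq mult.commute)
    have "real k * 1 \<le> real k * real m" using m1 by (intro mult_left_mono) auto
    hence b: "real k / real m \<le> real k" using mpos by (simp add: divide_le_eq)
    show "real k / real m \<le> real c" using a b unfolding c_def kv_def[symmetric] ckv by simp
    show "length T = m" unfolding T_def by simp
    fix i assume i: "i \<in> {1..m}"
    show "length (T ! (i - 1)) = min c (k div i)"
      using Tlen[OF i] unfolding c_def kv_def[symmetric] ckv kv_def kval_def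
      by (simp add: min.assoc)
    show "sorted_desc (T ! (i - 1))"
      unfolding Tnth[OF i] sorted_desc_def sorted_wrt_append
    proof (intro conjI)
      have "sorted_wrt (\<lambda>a b. b \<le> a) (take (l i) (z i))"
        using Z[OF i] unfolding top_k_sorted_def sorted_desc_def by simp
      thus "sorted_wrt (\<lambda>a b. b \<le> a) (map Some (take (l i) (z i)))"
        unfolding sorted_wrt_map by (rule sorted_wrt_mono_rel[rotated]) simp
      show "sorted_wrt (\<lambda>a b. b \<le> a) (replicate (kv i - l i) (None :: 'a option))"
        by (simp add: sorted_wrt_iff_nth_less)
      show "\<forall>x\<in>set (map Some (take (l i) (z i))). \<forall>y\<in>set (replicate (kv i - l i) None). y \<le> x"
        by auto
    qed
  next
    fix i :: nat and j assume i: "1 \<le> i \<and> i < m" and j: "j \<in> {1..length (T ! i)}"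
    have i1: "i \<in> {1..m}" and i2: "i + 1 \<in> {1..m}" using i by auto
    have Ti: "T ! i = T ! ((i + 1) - 1)" by simp
    {
      define p where "p = j - 1"
      have p: "p < kv (i + 1)" using j Tlen[OF i2] unfolding p_def by auto
      show "T ! i ! (j - 1) \<le> T ! (i - 1) ! (j - 1)"
      proof (cases "p < l (i + 1)")
        case False
        have "T ! i ! p = None" unfolding Ti Tnth[OF i2]
          using False p l_le_kv[OF i2] zlen[OF i2] l_le[of "i+1"] by (intro nth_pad_None) auto
        thus ?thesis unfolding p_def by simp
      next
        case True
        have pli: "p < l i" using True l_mono[of i] i by auto
        have e1: "T ! i ! p = Some (z (i + 1) ! p)" unfolding Ti Tnth[OF i2]
          using True zlen[OF i2] l_le[of "i+1"] by (intro nth_pad_Some) auto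
        have e2: "T ! (i - 1) ! p = Some (z i ! p)" unfolding Tnth[OF i1]
          using pli zlen[OF i1] l_le[of i] by (intro nth_pad_Some) auto
        let ?v = "z (i + 1) ! p"
        have "p + 1 \<le> cnt ?v (z (i + 1))"
          using cnt_nth[of "l (i+1)" "z (i+1)" p] Z[OF i2] True zlen[OF i2] l_le[of "i+1"] by auto
        also have "\<dots> = cnt ?v (tcol ns xs (i + 1))" using Z[OF i2] cnt_mset by blast
        also have "\<dots> \<le> cnt ?v (tcol ns xs i)" using i by (intro cnt_tcol_mono) auto
        also have "\<dots> = cnt ?v (z i)" using Z[OF i1] cnt_mset by metis
        finally have "?v \<le> z i ! p"
          using rank_le[of "l i" "z i" p ?v] Z[OF i1] pli zlen[OF i1] l_le[of i] by auto
        thus ?thesis using e1 e2 unfolding p_def by simp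
      qed
    }
  qed
  have SUM: "sum_list (map length T) = s"
  proof -
    have "sum_list (map length T) = sum_list (map kv [1..<m+1])"
      unfolding T_def map_map
      by (intro arg_cong[where f = sum_list] map_cong refl)
         (metis (no_types, lifting) T_def Tlen Tnth atLeastLessThanSuc_atLeastAtMost Suc_eq_plus1 comp_apply set_upt)
    also have "\<dots> = (\<Sum>i\<in>{1..<m+1}. kv i)" by (simp add: interv_sum_list_conv_sum_set_nat)
    also have "\<dots> = s" unfolding s_def kv_def by (metis Suc_eq_plus1 atLeastLessThanSuc_atLeastAtMost)
    finally show ?thesis .
  qed
  have res_topk: "top_k_sorted k res"
    using merger MT SUM unfolding is_mw_merger_def res_def by blast
  have res_mset: "mset res = mset (concat T)" unfolding res_def by (rule run_net_mset)
  have fT: "map the (filter (\<lambda>x. x \<noteq> None) (concat T)) = PRE"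
    unfolding T_def PRE_def by (simp add: filter_concat map_concat comp_def)
  have A_mset: "mset A = mset PRE"
  proof -
    have "mset A = image_mset the (filter_mset (\<lambda>x. x \<noteq> None) (mset res))" by (simp add: A_def)
    also have "\<dots> = mset (map the (filter (\<lambda>x. x \<noteq> None) (concat T)))" using res_mset by simp
    finally show ?thesis unfolding fT .
  qed
  have cntA: "cnt v A = (\<Sum>i\<in>{1..m}. cnt v (take (l i) (z i)))" for v
  proof -
    have "cnt v A = cnt v PRE" using A_mset by (rule cnt_mset)
    also have "\<dots> = (\<Sum>i\<in>{1..<m+1}. cnt v (take (l i) (z i)))" unfolding PRE_def by (rule cnt_concat_upt)
    finally show ?thesis by (metis Suc_eq_plus1 atLeastLessThanSuc_atLeastAtMost)
  qed
  have O_mset: "mset (A @ out) = mset xs"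
  proof -
    have "mset (A @ out) = mset PRE + mset out" using A_mset by simp
    also have "\<dots> = (\<Sum>i\<in>{1..<m+1}. mset (take (l i) (z i))) + (\<Sum>i\<in>{1..<m+1}. mset (drop (l i) (z i)))"
      unfolding PRE_def out_def mset_concat_upt ..
    also have "\<dots> = (\<Sum>i\<in>{1..<m+1}. mset (z i))"
      by (simp only: sum.distrib[symmetric] mset_append[symmetric] append_take_drop_id)
    also have "\<dots> = (\<Sum>i\<in>{1..m}. mset (tcol ns xs i))"
      by (metis (no_types, lifting) Suc_eq_plus1 Z atLeastLessThanSuc_atLeastAtMost sum.cong)
    also have "\<dots> = mset xs" by (rule mset_tcols)
    finally show ?thesis .
  qed
  have OUTCNT: "k \<le> cnt x A" if x: "x \<in> set out" for x
  proof -
    have "\<exists>i\<in>{1..m}. x \<in> set (drop (l i) (z i))"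
      using x unfolding out_def by (auto simp del: upt_Suc simp: less_Suc_eq_le)
    then obtain i where i: "i \<in> {1..m}" and xi: "x \<in> set (drop (l i) (z i))" by blast
    have "drop (l i) (z i) \<noteq> []" using xi by auto
    hence lt: "l i < ns ! (i - 1)" using zlen[OF i] by simp
    define q where "q = k div i"
    have liq: "l i = q" using lt unfolding l_def lval_def q_def by auto
    have ci: "q + 1 \<le> cnt x (z i)" using cnt_drop_mem[of "l i" "z i" x] Z[OF i] zlen[OF i] l_le[of i] xi liq by auto
    have trm: "min (q + 1) (k div i') \<le> cnt x (take (l i') (z i'))" if i': "i' \<in> {1..i}" for i'
    proof -
      have i'm: "i' \<in> {1..m}" using i' i by auto
      have "q + 1 \<le> cnt x (tcol ns xs i)" using ci Z[OF i] cnt_mset by metis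
      also have "\<dots> \<le> cnt x (tcol ns xs i')" using i' i by (intro cnt_tcol_mono) auto
      also have "\<dots> = cnt x (z i')" using Z[OF i'm] cnt_mset by metis
      finally have c1: "q + 1 \<le> cnt x (z i')" .
      have "ns ! (i - 1) \<le> ns ! (i' - 1)" using i' i by (intro ns_mono) auto
      hence "q + 1 \<le> ns ! (i' - 1)" using lt liq by simp
      hence c2: "min (q + 1) (k div i') \<le> l i'" unfolding l_def lval_def by simp
      have "min (cnt x (z i')) (l i') \<le> cnt x (take (l i') (z i'))"
        using cnt_take[of "l i'" "z i'" x] Z[OF i'm] zlen[OF i'm] l_le[of i'] by auto
      thus ?thesis using c1 c2 by linarith
    qed
    have "k \<le> (\<Sum>i'\<in>{1..i}. min (k div i + 1) (k div i'))" using i by (intro arith_sum) auto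
    also have "\<dots> \<le> (\<Sum>i'\<in>{1..i}. cnt x (take (l i') (z i')))" using trm q_def by (intro sum_mono) auto
    also have "\<dots> \<le> (\<Sum>i'\<in>{1..m}. cnt x (take (l i') (z i')))" using i by (intro sum_mono2) auto
    also have "\<dots> = cnt x A" using cntA by simp
    finally show ?thesis .
  qed
  have lenA: "k \<le> length A"
  proof (cases "out = []")
    case True
    have "length (A @ out) = n" using O_mset lx by (metis size_mset)
    thus ?thesis using True kn by simp
  next
    case False
    then obtain x where "x \<in> set out" by (cases out) auto
    hence "k \<le> cnt x A" by (rule OUTCNT)
    also have "\<dots> \<le> length A" unfolding cnt_def by simp
    finally show ?thesis .
  qed
  have A_topk: "top_k_sorted k A"
    unfolding A_def using res_topk lenA unfolding A_def by (intro filter_topk) auto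
  have "top_k_sorted k (A @ out)"
    unfolding topk_iff
  proof (intro conjI ballI)
    show "sorted_desc (take k (A @ out))" using A_topk lenA by (simp add: topk_iff)
    fix a b assume a: "a \<in> set (take k (A @ out))" and b: "b \<in> set (drop k (A @ out))"
    obtain p where p: "p < k" "p < length A" "a = A ! p" using a lenA by (auto simp: in_set_conv_nth)
    have "b \<in> set (drop k A) \<or> b \<in> set out" using b lenA by simp
    thus "b \<le> a"
    proof
      assume "b \<in> set (drop k A)"
      moreover have "a \<in> set (take k A)" using a lenA by simp
      ultimately show ?thesis using A_topk unfolding topk_iff by blast
    next
      assume "b \<in> set out"
      hence "p + 1 \<le> cnt b A" using OUTCNT p by fastforce
      thus ?thesis using rank_le[OF A_topk p(1) p(2)] p(3) by simp
    qed
  qed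
  thus ?thesis using O_mset unf by simp
qed

end


lemma sel_correct:
  fixes mw_merge :: "nat \<Rightarrow> nat \<Rightarrow> nat \<Rightarrow> cnet" and F :: "'a::linorder list \<Rightarrow> 'a list"
  assumes merger: "\<forall>s c k. is_mw_merger TYPE('a option) m c k s (mw_merge s c k)"
    and sel: "mw_sel m mw_merge n k F"
  shows "\<forall>xs. length xs = n \<longrightarrow> top_k_sorted k (F xs) \<and> mset (F xs) = mset xs"
  using sel
proof (induction rule: mw_sel.induct)
  case (base n N)
  show ?case
  proof (intro allI impI conjI)
    fix xs :: "'a list" assume len: "length xs = n"
    show "mset (run_net N xs) = mset xs" by (rule run_net_mset)
    let ?ys = "run_net N xs"
    have setys: "set ?ys = set xs" by (metis run_net_mset set_mset_mset)
    have xne: "xs \<noteq> []" using len base(1) by auto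
    hence ne: "?ys \<noteq> []" using setys by auto
    have hd: "hd ?ys = Max (set xs)" using base(2) len by simp
    show "top_k_sorted 1 ?ys" unfolding topk_iff
    proof (intro conjI ballI)
      show "sorted_desc (take 1 ?ys)" by (cases ?ys) (auto simp: sorted_desc_def)
      fix a b assume a: "a \<in> set (take 1 ?ys)" and b: "b \<in> set (drop 1 ?ys)"
      have "a = hd ?ys" using a ne by (cases ?ys) auto
      moreover have "b \<in> set xs" using b setys by (metis in_set_dropD)
      ultimately show "b \<le> a" using hd by simp
    qed
  qed
next
  case (step k n ns G)
  show ?case
  proof (intro allI impI)
    fix xs :: "'a list" assume len: "length xs = n"
    interpret mx m n ns xs using step(3) len by unfold_locales
    show "top_k_sorted k (mw_step m mw_merge ns k G xs) \<and> mset (mw_step m mw_merge ns k G xs) = mset xs"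
      by (rule step_correct[OF step(1) step(2) merger]) (use step(4) in auto)
  qed
qed

theorem mainTheorem3:
  fixes m n k :: nat
    and mw_merge :: "nat \<Rightarrow> nat \<Rightarrow> nat \<Rightarrow> cnet"
    and F :: "'a::linorder list \<Rightarrow> 'a list"
    and xs :: "'a list"
  assumes "2 \<le> m"
    and "\<forall>s c k. is_mw_merger TYPE('a option) m c k s (mw_merge s c k)"
    and "mw_sel m mw_merge n k F"
    and "1 \<le> k" and "k \<le> n"
    and "length xs = n"
  shows "top_k_sorted k (F xs)"
  using sel_correct[OF assms(2,3)] assms(6) by blast


end
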